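(* For $k\in\{2,3\}$, the graph $BT(k)$ lies in $\mathcal{G}(2k+1,3)$ and \[ \rho_3(BT(k))=\frac{(k+1)(k^2+1)}{3k+2}>\rho_3\big(T(3k+1,3)\big); \] in particular $f_3(2k+1,3)>\rho_3(T(3k+1,3))$.
   Context: $\mathcal{G}(\Delta,\omega)$ denotes the class of finite simple graphs $G$ with maximum degree $\Delta(G)\le\Delta$ and clique number $\omega(G)\le\omega$. $k_t(G)$ is the number of copies of $K_t$ in $G$ and $\rho_t(G)=k_t(G)/|V(G)|$. $f_t(\Delta,\omega)=\sup\{\rho_t(G): G\in\mathcal{G}(\Delta,\omega),\ |V(G)|\ge 1\}$. $T(n,r)$ denotes the $r$-partite Turán graph on $n$ vertices (complete $r$-partite, part sizes as equal as possible). For $k\ge2$, $\widetilde{BT}(k)$ is obtained from the complete bipartite graph $K_{k,k}$ by deleting one edge $xy$ and adding a new vertex adjacent exactly to $x$ and $y$; then $BT(k)=\widetilde{BT}(k)\vee I_{k+1}$ is the join of $\widetilde{BT}(k)$ with an independent set of $k+1$ new vertices (every vertex of $\widetilde{BT}(k)$ adjacent to every vertex of $I_{k+1}$). $BT(k)$ has $3k+2$ vertices. *)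

theory Defs
  imports Complex_Main
begin

definition simple_graph :: "'a set \<Rightarrow> ('a \<Rightarrow> 'a \<Rightarrow> bool) \<Rightarrow> bool" where
  "simple_graph V E \<longleftrightarrow> finite V \<and>
     (\<forall>x y. E x y \<longrightarrow> x \<in> V \<and> y \<in> V \<and> x \<noteq> y \<and> E y x)"

definition degree :: "'a set \<Rightarrow> ('a \<Rightarrow> 'a \<Rightarrow> bool) \<Rightarrow> 'a \<Rightarrow> nat" where
  "degree V E v = card {u \<in> V. E v u}"

definition is_clique :: "'a set \<Rightarrow> ('a \<Rightarrow> 'a \<Rightarrow> bool) \<Rightarrow> 'a set \<Rightarrow> bool" where
  "is_clique V E S \<longleftrightarrow> S \<subseteq> V \<and> (\<forall>x\<in>S. \<forall>y\<in>S. x \<noteq> y \<longrightarrow> E x y)"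

definition in_class :: "nat \<Rightarrow> nat \<Rightarrow> 'a set \<Rightarrow> ('a \<Rightarrow> 'a \<Rightarrow> bool) \<Rightarrow> bool" where
  "in_class D w V E \<longleftrightarrow> simple_graph V E \<and>
     (\<forall>v\<in>V. degree V E v \<le> D) \<and>
     (\<forall>S. is_clique V E S \<longrightarrow> card S \<le> w)"

definition num_cliques :: "nat \<Rightarrow> 'a set \<Rightarrow> ('a \<Rightarrow> 'a \<Rightarrow> bool) \<Rightarrow> nat" where
  "num_cliques t V E = card {S. is_clique V E S \<and> card S = t}"

definition clique_density :: "nat \<Rightarrow> 'a set \<Rightarrow> ('a \<Rightarrow> 'a \<Rightarrow> bool) \<Rightarrow> real" where
  "clique_density t V E = real (num_cliques t V E) / real (card V)"

text \<open>f_t(D,w): supremum of rho_t over all nonempty graphs in the class. Every finite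
graph is isomorphic to one with natural-number vertices, so it suffices to range
over graphs on nat.\<close>
definition f_sup :: "nat \<Rightarrow> nat \<Rightarrow> nat \<Rightarrow> real" where
  "f_sup t D w = Sup {clique_density t V E | (V :: nat set) E.
                         in_class D w V E \<and> V \<noteq> {}}"

text \<open>T(n,r): vertices 0..n-1, vertex i in part (i mod r); parts sizes differ by at most 1.\<close>
definition turan_V :: "nat \<Rightarrow> nat set" where
  "turan_V n = {0..<n}"

definition turan_E :: "nat \<Rightarrow> nat \<Rightarrow> nat \<Rightarrow> nat \<Rightarrow> bool" where
  "turan_E n r i j \<longleftrightarrow> i < n \<and> j < n \<and> i mod r \<noteq> j mod r"

text \<open>Vertices: L i, R i (i<k) the two sides of K_{k,k}; x = L 0, y = R 0;
Z the new vertex adjacent to x and y; I j (j < k+1) the joined independent set.\<close>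
datatype btv = L nat | R nat | Z | I nat

definition BT_V :: "nat \<Rightarrow> btv set" where
  "BT_V k = L ` {..<k} \<union> R ` {..<k} \<union> {Z} \<union> I ` {..<k+1}"

fun BT_tilde_adj :: "btv \<Rightarrow> btv \<Rightarrow> bool" where
  "BT_tilde_adj (L i) (R j) = (\<not> (i = 0 \<and> j = 0))"
| "BT_tilde_adj (R j) (L i) = (\<not> (i = 0 \<and> j = 0))"
| "BT_tilde_adj Z (L i) = (i = 0)"
| "BT_tilde_adj (L i) Z = (i = 0)"
| "BT_tilde_adj Z (R j) = (j = 0)"
| "BT_tilde_adj (R j) Z = (j = 0)"
| "BT_tilde_adj _ _ = False"

definition is_I :: "btv \<Rightarrow> bool" where
  "is_I v \<longleftrightarrow> (\<exists>j. v = I j)"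

definition BT_E :: "nat \<Rightarrow> btv \<Rightarrow> btv \<Rightarrow> bool" where
  "BT_E k u v \<longleftrightarrow> u \<in> BT_V k \<and> v \<in> BT_V k \<and>
     (BT_tilde_adj u v \<or> (is_I u \<and> \<not> is_I v) \<or> (\<not> is_I u \<and> is_I v))"

end

theory Submission
  imports Defs
begin


fun ksubs :: "nat \<Rightarrow> 'a list \<Rightarrow> 'a list list" where
"ksubs 0 xs = [[]]" | "ksubs (Suc n) [] = []" |
"ksubs (Suc n) (x#xs) = map ((#) x) (ksubs n xs) @ ksubs (Suc n) xs"

fun cl :: "('a \<Rightarrow> 'a \<Rightarrow> bool) \<Rightarrow> 'a list \<Rightarrow> bool" where
 "cl E [] = True" | "cl E (x#xs) = (list_all (E x) xs \<and> cl E xs)"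

lemma ksubs_elem: "l \<in> set (ksubs n xs) \<Longrightarrow> distinct xs \<Longrightarrow> distinct l \<and> length l = n \<and> set l \<subseteq> set xs"
  by (induction n xs arbitrary: l rule: ksubs.induct) force+

lemma ksubs_set: "distinct xs \<Longrightarrow> set (map set (ksubs n xs)) = {S. S \<subseteq> set xs \<and> card S = n}"
proof (induction n xs rule: ksubs.induct)
  case (1 xs)
  then show ?case using finite_subset by fastforce
next
  case (2 n)
  then show ?case by auto
next
  case (3 n x xs)
  have IH1: "set (map set (ksubs n xs)) = {S. S \<subseteq> set xs \<and> card S = n}"
    and IH2: "set (map set (ksubs (Suc n) xs)) = {S. S \<subseteq> set xs \<and> card S = Suc n}"
    using 3 by auto
  have xn: "x \<notin> set xs" using 3 by auto
  have "set (map set (ksubs (Suc n) (x#xs))) = insert x ` set (map set (ksubs n xs)) \<union> set (map set (ksubs (Suc n) xs))"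
    by auto
  also have "\<dots> = {S. S \<subseteq> set (x#xs) \<and> card S = Suc n}"
  proof (rule set_eqI, rule iffI)
    fix S assume "S \<in> insert x ` set (map set (ksubs n xs)) \<union> set (map set (ksubs (Suc n) xs))"
    then show "S \<in> {S. S \<subseteq> set (x#xs) \<and> card S = Suc n}"
    proof
      assume "S \<in> insert x ` set (map set (ksubs n xs))"
      then obtain T where T: "T \<subseteq> set xs" "card T = n" "S = insert x T" using IH1 by auto
      then have "finite T" using finite_subset by blast
      moreover have "x \<notin> T" using T xn by auto
      ultimately show ?thesis using T by auto
    next
      assume "S \<in> set (map set (ksubs (Suc n) xs))"
      then show ?thesis using IH2 by auto
    qed
  next
    fix S assume S: "S \<in> {S. S \<subseteq> set (x#xs) \<and> card S = Suc n}"
    show "S \<in> insert x ` set (map set (ksubs n xs)) \<union> set (map set (ksubs (Suc n) xs))"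
    proof (cases "x \<in> S")
      case True
      have "S - {x} \<subseteq> set xs" using S by auto
      moreover have "card (S - {x}) = n" using S True by (simp add: finite_subset)
      ultimately have "S - {x} \<in> set (map set (ksubs n xs))" using IH1 by auto
      moreover have "S = insert x (S - {x})" using True by auto
      ultimately show ?thesis by blast
    next
      case False
      then show ?thesis using S IH2 by auto
    qed
  qed
  finally show ?case .
qed

lemma ksubs_distinct: "distinct xs \<Longrightarrow> distinct (map set (ksubs n xs))"
proof (induction n xs rule: ksubs.induct)
  case (3 n x xs)
  have xn: "x \<notin> set xs" using 3 by auto
  have d1: "distinct (map set (ksubs n xs))" "distinct (map set (ksubs (Suc n) xs))" using 3 by auto
  have "map set (map ((#) x) (ksubs n xs)) = map (insert x) (map set (ksubs n xs))" by simp
  moreover have "distinct (map (insert x) (map set (ksubs n xs)))"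
  proof -
    have "inj_on (insert x) (set (map set (ksubs n xs)))"
    proof (rule inj_onI)
      fix A B assume A: "A \<in> set (map set (ksubs n xs))" and B: "B \<in> set (map set (ksubs n xs))" and AB: "insert x A = insert x B"
      have "x \<notin> A" "x \<notin> B" using A B ksubs_elem[of _ n xs] 3(3) xn by auto
      then show "A = B" using AB by (metis Diff_insert_absorb)
    qed
    then show ?thesis using d1 by (simp add: distinct_map comp_inj_on)
  qed
  moreover have "\<forall>A \<in> set (map set (ksubs (Suc n) xs)). x \<notin> A"
    using ksubs_elem xn 3 by fastforce
  ultimately show ?case using d1 by (auto simp: comp_def)
qed auto

lemma cl_iff: "(\<forall>x y. E x y = E y x) \<Longrightarrow> distinct l \<Longrightarrow> cl E l = (\<forall>x\<in>set l. \<forall>y\<in>set l. x \<noteq> y \<longrightarrow> E x y)"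
  by (induction l) (auto simp: list_all_iff)

lemma cl_cong: "(\<forall>x\<in>set l. \<forall>y\<in>set l. E x y = E' x y) \<Longrightarrow> cl E l = cl E' l"
  by (induction l) (auto simp: list_all_iff)

locale lg =
  fixes vs :: "'a list" and E Ea :: "'a \<Rightarrow> 'a \<Rightarrow> bool"
  assumes dist: "distinct vs"
    and sym: "\<And>x y. Ea x y = Ea y x"
    and irr: "\<And>x. \<not> Ea x x"
    and Edef: "E = (\<lambda>x y. x \<in> set vs \<and> y \<in> set vs \<and> Ea x y)"
begin

lemma sg: "simple_graph (set vs) E"
  unfolding simple_graph_def Edef using sym irr by auto

lemma clE: "l \<in> set (ksubs n vs) \<Longrightarrow> cl Ea l = is_clique (set vs) E (set l)"
proof -
  assume l: "l \<in> set (ksubs n vs)"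
  have "distinct l" "set l \<subseteq> set vs" using ksubs_elem[OF l dist] by auto
  then show ?thesis using cl_iff[of Ea l] sym unfolding is_clique_def Edef by auto
qed

lemma count: "num_cliques n (set vs) E = length (filter (cl Ea) (ksubs n vs))"
proof -
  have "{S. is_clique (set vs) E S \<and> card S = n} = set (filter (is_clique (set vs) E) (map set (ksubs n vs)))"
    using ksubs_set[OF dist, of n] by (auto simp: is_clique_def)
  then have "num_cliques n (set vs) E = length (filter (is_clique (set vs) E) (map set (ksubs n vs)))"
    unfolding num_cliques_def
    by (metis distinct_card distinct_filter ksubs_distinct[OF dist])
  also have "\<dots> = length (filter (is_clique (set vs) E \<circ> set) (ksubs n vs))"
    by (simp only: filter_map length_map)
  also have "filter (is_clique (set vs) E \<circ> set) (ksubs n vs) = filter (cl Ea) (ksubs n vs)"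
    by (rule filter_cong) (auto simp: clE)
  finally show ?thesis .
qed

lemma deg: "v \<in> set vs \<Longrightarrow> degree (set vs) E v = length (filter (Ea v) vs)"
proof -
  assume v: "v \<in> set vs"
  have "{u \<in> set vs. E v u} = set (filter (Ea v) vs)" using v by (auto simp: Edef)
  moreover have "card (set (filter (Ea v) vs)) = length (filter (Ea v) vs)"
    by (rule distinct_card) (simp add: dist)
  ultimately show ?thesis unfolding degree_def by simp
qed

lemma inclass:
  assumes "list_all (\<lambda>v. length (filter (Ea v) vs) \<le> D) vs"
    and "list_all (\<lambda>l. \<not> cl Ea l) (ksubs 4 vs)"
  shows "in_class D 3 (set vs) E"
  unfolding in_class_def
proof (intro conjI sg ballI allI impI)
  fix v assume "v \<in> set vs" then show "degree (set vs) E v \<le> D"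
    using assms(1) deg by (auto simp: list_all_iff)
next
  fix S assume S: "is_clique (set vs) E S"
  show "card S \<le> 3"
  proof (rule ccontr)
    assume "\<not> card S \<le> 3"
    then have "4 \<le> card S" by simp
    then obtain T where T: "T \<subseteq> S" "card T = 4" using obtain_subset_with_card_n[of 4 S] by blast
    have Tc: "is_clique (set vs) E T" using S T unfolding is_clique_def by auto
    then have "T \<in> set (map set (ksubs 4 vs))" using ksubs_set[OF dist, of 4] T by (auto simp: is_clique_def)
    then obtain l where l: "l \<in> set (ksubs 4 vs)" "T = set l" by auto
    then have "cl Ea l" using clE Tc by auto
    then show False using assms(2) l by (auto simp: list_all_iff)
  qed
qed

end

lemma density_bound:
  assumes "in_class D w V E" "V \<noteq> {}"
  shows "clique_density 3 V E \<le> 2^(D+1)"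
proof -
  have fin: "finite V" and sg: "\<forall>x y. E x y \<longrightarrow> x \<in> V \<and> y \<in> V \<and> x \<noteq> y \<and> E y x"
    using assms unfolding in_class_def simple_graph_def by auto
  define N where "N v = {u\<in>V. E v u}" for v
  have sub: "{S. is_clique V E S \<and> card S = 3} \<subseteq> (\<Union>v\<in>V. Pow (insert v (N v)))"
  proof
    fix S assume S: "S \<in> {S. is_clique V E S \<and> card S = 3}"
    then have "S \<noteq> {}" by auto
    then obtain v where v: "v \<in> S" by auto
    have "S \<subseteq> insert v (N v)" using S v unfolding is_clique_def N_def by auto
    then show "S \<in> (\<Union>v\<in>V. Pow (insert v (N v)))" using v S unfolding is_clique_def by auto
  qed
  have finN: "finite (N v)" for v using fin unfolding N_def by auto
  have "num_cliques 3 V E \<le> card (\<Union>v\<in>V. Pow (insert v (N v)))"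
    unfolding num_cliques_def using sub by (intro card_mono) (auto simp: fin finN)
  also have "\<dots> \<le> (\<Sum>v\<in>V. card (Pow (insert v (N v))))" by (rule card_UN_le[OF fin])
  also have "\<dots> \<le> (\<Sum>v\<in>V. 2^(D+1))"
  proof (rule sum_mono)
    fix v assume v: "v \<in> V"
    have "card (N v) \<le> D" using assms v unfolding in_class_def degree_def N_def by auto
    then have "card (insert v (N v)) \<le> D + 1" using card_insert_le_m1 finN
      by (metis Suc_eq_plus1 card_insert_if finN le_SucI Suc_le_mono)
    then have "(2::nat)^card (insert v (N v)) \<le> 2^(D+1)"
      by (rule power_increasing) simp
    then show "card (Pow (insert v (N v))) \<le> 2^(D+1)"
      by (simp add: card_Pow finN)
  qed
  also have "\<dots> = card V * 2^(D+1)" by simp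
  finally have "real (num_cliques 3 V E) \<le> real (card V * 2^(D+1))"
    by (simp only: of_nat_le_iff)
  then have "real (num_cliques 3 V E) \<le> real (card V) * 2^(D+1)" by simp
  moreover have "card V > 0" using fin assms(2) by (simp add: card_gt_0_iff)
  ultimately show ?thesis unfolding clique_density_def by (simp add: divide_le_eq mult.commute)
qed



definition vsBT :: "nat \<Rightarrow> btv list" where
 "vsBT k = map L [0..<k] @ map R [0..<k] @ [Z] @ map I [0..<k+1]"

lemma isI[simp]: "is_I (L i) = False" "is_I (R i) = False" "is_I Z = False" "is_I (I i) = True"
  by (auto simp: is_I_def)

lemma BTV: "BT_V k = set (vsBT k)" by (auto simp: BT_V_def vsBT_def)

lemma vsBT_dist: "distinct (vsBT k)" by (auto simp: vsBT_def distinct_map inj_on_def)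

lemma vsBT_len: "length (vsBT k) = 3*k+2" by (simp add: vsBT_def)

fun isIb :: "btv \<Rightarrow> bool" where
  "isIb (I j) = True" | "isIb _ = False"

lemma isIb: "is_I u = isIb u" by (cases u) auto

definition BTa :: "btv \<Rightarrow> btv \<Rightarrow> bool" where
  "BTa u v = (BT_tilde_adj u v \<or> isIb u \<noteq> isIb v)"

lemma BTa_sym: "BTa u v = BTa v u"
  unfolding BTa_def by (cases u; cases v) auto

lemma BTa_irr: "\<not> BTa u u"
  unfolding BTa_def by (cases u) auto

lemma BTE: "BT_E k = (\<lambda>x y. x \<in> set (vsBT k) \<and> y \<in> set (vsBT k) \<and> BTa x y)"
  unfolding BT_E_def BTa_def BTV isIb by (intro ext) auto

interpretation bt: lg "vsBT k" "BT_E k" BTa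
  by unfold_locales (auto simp: vsBT_dist BTa_sym BTa_irr BTE)

fun enc :: "btv \<Rightarrow> nat" where
  "enc (L i) = 4*i" | "enc (R i) = 4*i+1" | "enc Z = 2" | "enc (I j) = 4*j+3"

definition dec :: "nat \<Rightarrow> btv" where
  "dec a = (if a mod 4 = 0 then L (a div 4) else if a mod 4 = 1 then R (a div 4)
            else if a mod 4 = 2 then Z else I (a div 4))"

lemma dec_enc[simp]: "dec (enc x) = x"
  by (cases x) (auto simp: dec_def)

lemma inj_enc: "inj enc" by (metis dec_enc injI)

definition natE :: "nat \<Rightarrow> nat \<Rightarrow> nat \<Rightarrow> bool" where
  "natE k a b = (a \<in> set (map enc (vsBT k)) \<and> b \<in> set (map enc (vsBT k)) \<and> BTa (dec a) (dec b))"

interpretation nt: lg "map enc (vsBT k)" "natE k" "\<lambda>a b. BTa (dec a) (dec b)"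
  by unfold_locales (auto simp: vsBT_dist BTa_sym BTa_irr natE_def distinct_map inj_enc intro!: ext inj_on_subset[OF inj_enc])

lemma ksubs_map: "ksubs n (map f xs) = map (map f) (ksubs n xs)"
  by (induction n xs rule: ksubs.induct) auto

lemma cl_map: "cl E (map f l) = cl (\<lambda>a b. E (f a) (f b)) l"
  by (induction l) (auto simp: list_all_iff)

interpretation tu: lg "[0..<n]" "turan_E n 3" "\<lambda>i j. i mod 3 \<noteq> (j::nat) mod 3"
  by unfold_locales (auto simp: turan_E_def intro!: ext)

lemma density_list: "clique_density 3 (set vs) E = real (num_cliques 3 (set vs) E) / real (length vs)"
  if "distinct vs" using that by (simp add: clique_density_def distinct_card)

lemma main_k:
  assumes C1: "length (filter (cl BTa) (ksubs 3 (vsBT k))) = (k+1)*(k^2+1)"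
    and C2: "list_all (\<lambda>l. \<not> cl BTa l) (ksubs 4 (vsBT k))"
    and C3: "list_all (\<lambda>v. length (filter (BTa v) (vsBT k)) \<le> 2*k+1) (vsBT k)"
    and T: "clique_density 3 (turan_V (3*k+1)) (turan_E (3*k+1) 3) < real ((k+1)*(k^2+1)) / real (3*k+2)"
  shows "in_class (2*k+1) 3 (BT_V k) (BT_E k)
    \<and> clique_density 3 (BT_V k) (BT_E k) = real ((k+1)*(k^2+1)) / real (3*k+2)
    \<and> clique_density 3 (BT_V k) (BT_E k) > clique_density 3 (turan_V (3*k+1)) (turan_E (3*k+1) 3)
    \<and> f_sup 3 (2*k+1) 3 > clique_density 3 (turan_V (3*k+1)) (turan_E (3*k+1) 3)"
proof -
  have ic: "in_class (2*k+1) 3 (BT_V k) (BT_E k)"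
    unfolding BTV by (rule bt.inclass[OF C3 C2])
  have dens: "clique_density 3 (BT_V k) (BT_E k) = real ((k+1)*(k^2+1)) / real (3*k+2)"
    unfolding BTV by (simp add: density_list vsBT_dist bt.count C1 vsBT_len)
  have C3': "list_all (\<lambda>v. length (filter (\<lambda>b. BTa (dec v) (dec b)) (map enc (vsBT k))) \<le> 2*k+1) (map enc (vsBT k))"
    using C3 by (simp add: list.pred_map filter_map comp_def)
  have C2': "list_all (\<lambda>l. \<not> cl (\<lambda>a b. BTa (dec a) (dec b)) l) (ksubs 4 (map enc (vsBT k)))"
    using C2 by (simp add: ksubs_map list.pred_map comp_def cl_map)
  have icn: "in_class (2*k+1) 3 (set (map enc (vsBT k))) (natE k)"
    by (rule nt.inclass[OF C3' C2'])
  have densn: "clique_density 3 (set (map enc (vsBT k))) (natE k) = real ((k+1)*(k^2+1)) / real (3*k+2)"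
  proof -
    have "clique_density 3 (set (map enc (vsBT k))) (natE k) = real (num_cliques 3 (set (map enc (vsBT k))) (natE k)) / real (length (map enc (vsBT k)))"
      by (rule density_list) (simp add: vsBT_dist distinct_map inj_on_subset[OF inj_enc])
    also have "num_cliques 3 (set (map enc (vsBT k))) (natE k) = length (filter (cl BTa) (ksubs 3 (vsBT k)))"
      unfolding nt.count by (simp add: ksubs_map filter_map comp_def cl_map)
    finally show ?thesis using C1 by (simp add: vsBT_len)
  qed
  define SS where "SS = {clique_density 3 V E | (V :: nat set) E. in_class (2*k+1) 3 V E \<and> V \<noteq> {}}"
  have ne: "set (map enc (vsBT k)) \<noteq> {}" by (simp add: vsBT_def)
  have mem: "real ((k+1)*(k^2+1)) / real (3*k+2) \<in> SS"
    unfolding SS_def using icn ne densn by force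
  have bdd: "bdd_above SS"
    unfolding SS_def bdd_above_def using density_bound by blast
  have "real ((k+1)*(k^2+1)) / real (3*k+2) \<le> f_sup 3 (2*k+1) 3"
    unfolding f_sup_def SS_def[symmetric] by (rule cSup_upper[OF mem bdd])
  then show ?thesis using ic dens T by linarith
qed


lemma comp2: "length (filter (cl BTa) (ksubs 3 (vsBT 2))) = 15"
    "list_all (\<lambda>l. \<not> cl BTa l) (ksubs 4 (vsBT 2))"
    "list_all (\<lambda>v. length (filter (BTa v) (vsBT 2)) \<le> 5) (vsBT 2)"
  by code_simp+
lemma comp3: "length (filter (cl BTa) (ksubs 3 (vsBT 3))) = 40"
    "list_all (\<lambda>l. \<not> cl BTa l) (ksubs 4 (vsBT 3))"
    "list_all (\<lambda>v. length (filter (BTa v) (vsBT 3)) \<le> 7) (vsBT 3)"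
  by code_simp+

lemma tur7: "clique_density 3 (turan_V 7) (turan_E 7 3) = 12/7"
proof -
  have h: "length (filter (cl (\<lambda>i j. i mod 3 \<noteq> (j::nat) mod 3)) (ksubs 3 [0..<7])) = 12"
    by code_simp
  have d: "clique_density 3 (set [0..<7]) (turan_E 7 3) = real (num_cliques 3 (set [0..<7]) (turan_E 7 3)) / real (length [0..<7])"
    by (rule density_list) simp
  have c: "num_cliques 3 (set [0..<7]) (turan_E 7 3) = 12"
    by (simp only: tu.count h)
  have tv: "turan_V 7 = set [0..<7]" by (simp add: turan_V_def)
  show ?thesis unfolding tv d c by simp
qed

lemma tur10: "clique_density 3 (turan_V 10) (turan_E 10 3) = 36/10"
proof -
  have h: "length (filter (cl (\<lambda>i j. i mod 3 \<noteq> (j::nat) mod 3)) (ksubs 3 [0..<10])) = 36"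
    by code_simp
  have d: "clique_density 3 (set [0..<10]) (turan_E 10 3) = real (num_cliques 3 (set [0..<10]) (turan_E 10 3)) / real (length [0..<10])"
    by (rule density_list) simp
  have c: "num_cliques 3 (set [0..<10]) (turan_E 10 3) = 36"
    by (simp only: tu.count h)
  have tv: "turan_V 10 = set [0..<10]" by (simp add: turan_V_def)
  show ?thesis unfolding tv d c by simp
qed

theorem mainTheorem16:
  fixes k :: nat
  assumes "k \<in> {2, 3}"
  shows "in_class (2*k+1) 3 (BT_V k) (BT_E k)
    \<and> clique_density 3 (BT_V k) (BT_E k) = real ((k+1)*(k^2+1)) / real (3*k+2)
    \<and> clique_density 3 (BT_V k) (BT_E k) > clique_density 3 (turan_V (3*k+1)) (turan_E (3*k+1) 3)
    \<and> f_sup 3 (2*k+1) 3 > clique_density 3 (turan_V (3*k+1)) (turan_E (3*k+1) 3)"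
proof -
  consider "k = 2" | "k = 3" using assms by auto
  then show ?thesis
  proof cases
    case 1
    show ?thesis unfolding 1 by (rule main_k) (simp_all add: comp2 tur7)
  next
    case 2
    show ?thesis unfolding 2 by (rule main_k) (simp_all add: comp3 tur10)
  qed
qed

end
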